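(* Let $(X,\mathcal E,\Psi,\mathfrak F,\mathfrak P)$ be a generalized gradient system (as described in the context) which satisfies the chain-rule inequality (CRI). Then every EDI solution $P\in \mathrm{AC}([0,T];X)$ of $(X,\mathcal E,\Psi,\mathfrak F,\mathfrak P)$ is an EDB solution of $(X,\mathcal E,\Psi,\mathfrak F,\mathfrak P)$.
   Context: Setting: $X$ is a separable reflexive Banach space with dual $X^*$ and duality pairing $\langle\cdot,\cdot\rangle$; $T>0$. $\mathcal E:[0,T]\times X\to(-\infty,\infty]$ is bounded from below and lower semicontinuous, and $\{P:\mathcal E(t,P)<\infty\}=\mathrm D$ for all $t\in[0,T]$, for a fixed set $\mathrm D\subset X$. $\Psi=(\Psi_P)_{P\in\mathrm D}$ is a family of non-negative convex functionals $\Psi_P:X\to[0,\infty)$ such that $\Psi_P$ and its Fenchel conjugate $\Psi_P^*(\Xi)=\sup_{V\in X}(\langle\Xi,V\rangle-\Psi_P(V))$ have superlinear growth at infinity; $\partial\Psi_P$ denotes the convex subdifferential. $\mathfrak F:[0,T]\times\mathrm D\rightrightarrows X^*$ is a multivalued map and $\mathfrak P:\mathrm{graph}(\mathfrak F)\to\mathbb R$ is a Borel map. EDI solution: $P\in\mathrm{AC}([0,T];X)$ such that there exist $\mathscr E\in \mathrm{BV}([0,T])$ with $\mathscr E(t)\ge\mathcal E(t,P(t))$ for all $t\in[0,T]$ and $\mathscr E(s)=\mathcal E(s,P(s))$ for a.a. $s\in(0,T)$ and for $s=0$, and $\Xi\in L^1(0,T;X^* )$ with $\Xi(t)\in\mathfrak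 F(t,P(t))$ for a.a. $t$, such that for all $0\le s\le t\le T$: $\mathscr E(t)+\int_s^t\big(\Psi_{P(r)}(\dot P(r))+\Psi^*_{P(r)}(-\Xi(r))\big)dr\le \mathscr E(s)+\int_s^t\mathfrak P(r,P(r),\Xi(r))\,dr$. EDB solution: $P\in\mathrm{AC}([0,T];X)$ such that there exists $\Xi\in L^1(0,T;X^* )$ with $\Xi(t)\in\mathfrak F(t,P(t))$ and $0\in\partial\Psi_{P(t)}(\dot P(t))+\Xi(t)$ for a.a. $t\in(0,T)$, and for all $0\le s\le t\le T$: $\mathcal E(t,P(t))+\int_s^t\big(\Psi_{P(r)}(\dot P(r))+\Psi^*_{P(r)}(-\Xi(r))\big)dr= \mathcal E(s,P(s))+\int_s^t\mathfrak P(r,P(r),\Xi(r))\,dr$. Chain-rule inequality (CRI): for every $P\in\mathrm{AC}([0,T];X)$ and $\Xi\in L^1(0,T;X^* )$ with $\sup_{t\in(0,T)}|\mathcal E(t,P(t))|<\infty$, $\Xi(t)\in\mathfrak F(t,P(t))$ for a.a. $t$, $\int_0^T\Psi_{P(t)}(\dot P(t))dt<\infty$ and $\int_0^T\Psi^*_{P(t)}(-\Xi(t))dt<\infty$, the map $t\mapsto\mathcal E(t,P(t))$ is absolutely continuous and $\frac{d}{dt}\mathcal E(t,P(t))\ge\langle\Xi(t),\dot P(t)\rangle+\mathfrak P(t,P(t),\Xi(t))$ for a.a. $t\in(0,T)$. *)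

theory Defs
  imports "HOL-Analysis.Analysis"
begin

definition ac_on :: "real \<Rightarrow> real \<Rightarrow> (real \<Rightarrow> 'a::real_normed_vector) \<Rightarrow> bool" where
  "ac_on a b f \<longleftrightarrow>
     (\<forall>\<epsilon>>0. \<exists>\<delta>>0. \<forall>(n::nat) (I::nat \<Rightarrow> real \<times> real).
        (\<forall>i<n. a \<le> fst (I i) \<and> fst (I i) \<le> snd (I i) \<and> snd (I i) \<le> b)
        \<and> (\<forall>i<n. \<forall>j<n. i \<noteq> j \<longrightarrow>
              {fst (I i)<..<snd (I i)} \<inter> {fst (I j)<..<snd (I j)} = {})
        \<and> (\<Sum>i<n. snd (I i) - fst (I i)) < \<delta>
        \<longrightarrow> (\<Sum>i<n. norm (f (snd (I i)) - f (fst (I i)))) < \<epsilon>)"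

definition bv_on :: "real \<Rightarrow> real \<Rightarrow> (real \<Rightarrow> real) \<Rightarrow> bool" where
  "bv_on a b f \<longleftrightarrow>
     (\<exists>C. \<forall>(n::nat) (t::nat \<Rightarrow> real).
        (\<forall>i\<le>n. a \<le> t i \<and> t i \<le> b) \<and> (\<forall>i<n. t i \<le> t (Suc i))
        \<longrightarrow> (\<Sum>i<n. \<bar>f (t (Suc i)) - f (t i)\<bar>) \<le> C)"

text \<open>The dual space X* is modelled by a type 'd together with an isometric
  linear bijection dual onto the bounded linear functionals on 'x;
  the pairing is \<langle>\<xi>,v\<rangle> = blinfun_apply (dual \<xi>) v.\<close>
definition dual_pairing :: "('d::real_normed_vector \<Rightarrow> ('x::real_normed_vector \<Rightarrow>\<^sub>L real)) \<Rightarrow> bool" where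
  "dual_pairing dual \<longleftrightarrow> bounded_linear dual \<and> (\<forall>\<xi>. norm (dual \<xi>) = norm \<xi>) \<and> surj dual"

definition reflexive_pairing :: "('d::real_normed_vector \<Rightarrow> ('x::real_normed_vector \<Rightarrow>\<^sub>L real)) \<Rightarrow> bool" where
  "reflexive_pairing dual \<longleftrightarrow>
     (\<forall>\<phi> :: 'd \<Rightarrow>\<^sub>L real. \<exists>x. \<forall>\<xi>. blinfun_apply \<phi> \<xi> = blinfun_apply (dual \<xi>) x)"

definition fconj :: "('d \<Rightarrow> ('x::real_normed_vector \<Rightarrow>\<^sub>L real)) \<Rightarrow> ('x \<Rightarrow> real) \<Rightarrow> 'd \<Rightarrow> real" where
  "fconj dual \<psi> \<xi> = (SUP v. blinfun_apply (dual \<xi>) v - \<psi> v)"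

definition subdiff :: "('d \<Rightarrow> ('x::real_normed_vector \<Rightarrow>\<^sub>L real)) \<Rightarrow> ('x \<Rightarrow> real) \<Rightarrow> 'x \<Rightarrow> 'd set" where
  "subdiff dual \<psi> v = {\<xi>. \<forall>w. \<psi> w \<ge> \<psi> v + blinfun_apply (dual \<xi>) (w - v)}"

definition superlinear :: "('a::real_normed_vector \<Rightarrow> real) \<Rightarrow> bool" where
  "superlinear f \<longleftrightarrow> (\<forall>M. \<exists>R. \<forall>v. norm v \<ge> R \<longrightarrow> f v \<ge> M * norm v)"

definition lsc_energy :: "real \<Rightarrow> (real \<Rightarrow> 'x::real_normed_vector \<Rightarrow> ereal) \<Rightarrow> bool" where
  "lsc_energy T E \<longleftrightarrow>
     (\<forall>t x (ts::nat \<Rightarrow> real) xs. t \<in> {0..T} \<and> (\<forall>n. ts n \<in> {0..T}) \<and>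
        ts \<longlonglongrightarrow> t \<and> xs \<longlonglongrightarrow> x \<longrightarrow> E t x \<le> liminf (\<lambda>n. E (ts n) (xs n)))"

definition graphF :: "real \<Rightarrow> 'x set \<Rightarrow> (real \<Rightarrow> 'x \<Rightarrow> 'd set) \<Rightarrow> (real \<times> 'x \<times> 'd) set" where
  "graphF T D F = {(t, x, \<xi>). t \<in> {0..T} \<and> x \<in> D \<and> \<xi> \<in> F t x}"

definition gen_gradient_system ::
  "real \<Rightarrow> ('d::{banach,second_countable_topology} \<Rightarrow> ('x::{banach,second_countable_topology} \<Rightarrow>\<^sub>L real))
   \<Rightarrow> 'x set \<Rightarrow> (real \<Rightarrow> 'x \<Rightarrow> ereal) \<Rightarrow> ('x \<Rightarrow> 'x \<Rightarrow> real)
   \<Rightarrow> (real \<Rightarrow> 'x \<Rightarrow> 'd set) \<Rightarrow> (real \<Rightarrow> 'x \<Rightarrow> 'd \<Rightarrow> real) \<Rightarrow> bool" where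
  "gen_gradient_system T dual D E Psi F Pw \<longleftrightarrow>
     T > 0 \<and> dual_pairing dual \<and> reflexive_pairing dual
     \<and> (\<exists>c. \<forall>t\<in>{0..T}. \<forall>x. E t x \<ge> ereal c)
     \<and> lsc_energy T E
     \<and> (\<forall>t\<in>{0..T}. {x. E t x < \<infinity>} = D)
     \<and> (\<forall>P\<in>D. convex_on UNIV (Psi P) \<and> (\<forall>v. Psi P v \<ge> 0)
              \<and> superlinear (Psi P) \<and> superlinear (fconj dual (Psi P)))
     \<and> (\<lambda>(t, x, \<xi>). Pw t x \<xi>) \<in> borel_measurable (restrict_space borel (graphF T D F))"

definition is_deriv_ae :: "real \<Rightarrow> (real \<Rightarrow> 'x::real_normed_vector) \<Rightarrow> (real \<Rightarrow> 'x) \<Rightarrow> bool" where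
  "is_deriv_ae T P Pd \<longleftrightarrow> (AE t in lborel. t \<in> {0<..<T} \<longrightarrow> (P has_vector_derivative Pd t) (at t))"

definition chain_rule_ineq ::
  "real \<Rightarrow> ('d::{banach,second_countable_topology} \<Rightarrow> ('x::{banach,second_countable_topology} \<Rightarrow>\<^sub>L real))
   \<Rightarrow> (real \<Rightarrow> 'x \<Rightarrow> ereal) \<Rightarrow> ('x \<Rightarrow> 'x \<Rightarrow> real)
   \<Rightarrow> (real \<Rightarrow> 'x \<Rightarrow> 'd set) \<Rightarrow> (real \<Rightarrow> 'x \<Rightarrow> 'd \<Rightarrow> real) \<Rightarrow> bool" where
  "chain_rule_ineq T dual E Psi F Pw \<longleftrightarrow>
     (\<forall>P Pd Xi. ac_on 0 T P \<and> is_deriv_ae T P Pd \<and> set_integrable lborel {0..T} Xi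
        \<and> (\<exists>C. \<forall>t\<in>{0<..<T}. \<bar>E t (P t)\<bar> \<le> ereal C)
        \<and> (AE t in lborel. t \<in> {0<..<T} \<longrightarrow> Xi t \<in> F t (P t))
        \<and> set_integrable lborel {0..T} (\<lambda>t. Psi (P t) (Pd t))
        \<and> set_integrable lborel {0..T} (\<lambda>t. fconj dual (Psi (P t)) (- Xi t))
        \<longrightarrow> (\<forall>t\<in>{0..T}. \<bar>E t (P t)\<bar> \<noteq> \<infinity>)
          \<and> ac_on 0 T (\<lambda>t. real_of_ereal (E t (P t)))
          \<and> (AE t in lborel. t \<in> {0<..<T} \<longrightarrow>
               (\<exists>D. ((\<lambda>s. real_of_ereal (E s (P s))) has_real_derivative D) (at t)
                    \<and> D \<ge> blinfun_apply (dual (Xi t)) (Pd t) + Pw t (P t) (Xi t))))"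

definition EDI_solution ::
  "real \<Rightarrow> ('d::{banach,second_countable_topology} \<Rightarrow> ('x::{banach,second_countable_topology} \<Rightarrow>\<^sub>L real))
   \<Rightarrow> (real \<Rightarrow> 'x \<Rightarrow> ereal) \<Rightarrow> ('x \<Rightarrow> 'x \<Rightarrow> real)
   \<Rightarrow> (real \<Rightarrow> 'x \<Rightarrow> 'd set) \<Rightarrow> (real \<Rightarrow> 'x \<Rightarrow> 'd \<Rightarrow> real) \<Rightarrow> (real \<Rightarrow> 'x) \<Rightarrow> bool" where
  "EDI_solution T dual E Psi F Pw P \<longleftrightarrow>
     ac_on 0 T P \<and>
     (\<exists>Pd Es Xi. is_deriv_ae T P Pd \<and> bv_on 0 T Es
        \<and> (\<forall>t\<in>{0..T}. ereal (Es t) \<ge> E t (P t))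
        \<and> (AE s in lborel. s \<in> {0<..<T} \<longrightarrow> ereal (Es s) = E s (P s))
        \<and> ereal (Es 0) = E 0 (P 0)
        \<and> set_integrable lborel {0..T} Xi
        \<and> (AE t in lborel. t \<in> {0<..<T} \<longrightarrow> Xi t \<in> F t (P t))
        \<and> set_integrable lborel {0..T} (\<lambda>r. Psi (P r) (Pd r))
        \<and> set_integrable lborel {0..T} (\<lambda>r. fconj dual (Psi (P r)) (- Xi r))
        \<and> set_integrable lborel {0..T} (\<lambda>r. Pw r (P r) (Xi r))
        \<and> (\<forall>s t. 0 \<le> s \<and> s \<le> t \<and> t \<le> T \<longrightarrow>
             Es t + (LINT r:{s..t}|lborel. Psi (P r) (Pd r) + fconj dual (Psi (P r)) (- Xi r))
             \<le> Es s + (LINT r:{s..t}|lborel. Pw r (P r) (Xi r))))"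

definition EDB_solution ::
  "real \<Rightarrow> ('d::{banach,second_countable_topology} \<Rightarrow> ('x::{banach,second_countable_topology} \<Rightarrow>\<^sub>L real))
   \<Rightarrow> (real \<Rightarrow> 'x \<Rightarrow> ereal) \<Rightarrow> ('x \<Rightarrow> 'x \<Rightarrow> real)
   \<Rightarrow> (real \<Rightarrow> 'x \<Rightarrow> 'd set) \<Rightarrow> (real \<Rightarrow> 'x \<Rightarrow> 'd \<Rightarrow> real) \<Rightarrow> (real \<Rightarrow> 'x) \<Rightarrow> bool" where
  "EDB_solution T dual E Psi F Pw P \<longleftrightarrow>
     ac_on 0 T P \<and>
     (\<exists>Pd Xi. is_deriv_ae T P Pd
        \<and> set_integrable lborel {0..T} Xi
        \<and> (AE t in lborel. t \<in> {0<..<T} \<longrightarrow>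
              Xi t \<in> F t (P t) \<and> 0 \<in> (\<lambda>\<eta>. \<eta> + Xi t) ` subdiff dual (Psi (P t)) (Pd t))
        \<and> set_integrable lborel {0..T} (\<lambda>r. Psi (P r) (Pd r))
        \<and> set_integrable lborel {0..T} (\<lambda>r. fconj dual (Psi (P r)) (- Xi r))
        \<and> set_integrable lborel {0..T} (\<lambda>r. Pw r (P r) (Xi r))
        \<and> (\<forall>s t. 0 \<le> s \<and> s \<le> t \<and> t \<le> T \<longrightarrow>
             E t (P t) + ereal (LINT r:{s..t}|lborel. Psi (P r) (Pd r) + fconj dual (Psi (P r)) (- Xi r))
             = E s (P s) + ereal (LINT r:{s..t}|lborel. Pw r (P r) (Xi r))))"

end

theory Submission
  imports Defs
begin


lemma tagged_interval_real:
  assumes "p tagged_division_of {a..b::real}" "(x,K) \<in> p"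
  shows "\<exists>u v. K = {u..v} \<and> u \<le> x \<and> x \<le> v \<and> a \<le> u \<and> v \<le> b \<and> Inf K = u \<and> Sup K = v
     \<and> Henstock_Kurzweil_Integration.content K = v - u \<and> interior K = {u<..<v}"
proof -
  from tagged_division_ofD(2,3,4)[OF assms(1) assms(2)] obtain u v where
    K: "K = cbox u v" "x \<in> K" "K \<subseteq> {a..b}" by blast
  then have "u \<le> x" "x \<le> v" by auto
  moreover have "a \<le> u" "v \<le> b" using K \<open>u \<le> x\<close> \<open>x \<le> v\<close> by auto
  ultimately show ?thesis using K by (intro exI[of _ u] exI[of _ v]) auto
qed

lemma ac_tagged:
  fixes f :: "real \<Rightarrow> real"
  assumes ac: "ac_on a b f" and e: "e > 0"
  shows "\<exists>\<eta>>0. \<forall>p q. p tagged_division_of {a..b} \<and> q \<subseteq> p \<and> (\<Sum>(x,K)\<in>q. Henstock_Kurzweil_Integration.content K) < \<eta>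
            \<longrightarrow> (\<Sum>(x,K)\<in>q. \<bar>f (Sup K) - f (Inf K)\<bar>) < e"
proof -
  obtain \<delta> where d: "\<delta> > 0" and H: "\<And>(n::nat) (I::nat \<Rightarrow> real \<times> real). (\<forall>i<n. a \<le> fst (I i) \<and> fst (I i) \<le> snd (I i) \<and> snd (I i) \<le> b)
        \<and> (\<forall>i<n. \<forall>j<n. i \<noteq> j \<longrightarrow>
              {fst (I i)<..<snd (I i)} \<inter> {fst (I j)<..<snd (I j)} = {})
        \<and> (\<Sum>i<n. snd (I i) - fst (I i)) < \<delta>
        \<Longrightarrow> (\<Sum>i<n. norm (f (snd (I i)) - f (fst (I i)))) < e"
    using ac e unfolding ac_on_def by blast
  show ?thesis
  proof (intro exI[of _ \<delta>] conjI allI impI d)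
    fix p q assume pq: "p tagged_division_of {a..b} \<and> q \<subseteq> p \<and> (\<Sum>(x,K)\<in>q. Henstock_Kurzweil_Integration.content K) < \<delta>"
    have fq: "finite q" using pq tagged_division_ofD(1) finite_subset by metis
    obtain h where h: "bij_betw h {0..<card q} q" using ex_bij_betw_nat_finite[OF fq] by blast
    define I where "I i = (Inf (snd (h i)), Sup (snd (h i)))" for i
    have mem: "h i \<in> p" if "i < card q" for i using h that pq unfolding bij_betw_def by auto
    have iv: "\<exists>u v. snd (h i) = {u..v} \<and> a \<le> u \<and> v \<le> b \<and> u \<le> v \<and> Inf (snd (h i)) = u \<and> Sup (snd (h i)) = v
     \<and> Henstock_Kurzweil_Integration.content (snd (h i)) = v - u \<and> interior (snd (h i)) = {u<..<v}" if "i < card q" for i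
      using tagged_interval_real[OF conjunct1[OF pq], of "fst (h i)" "snd (h i)"] mem[OF that]
      by fastforce
    have c1: "\<forall>i<card q. a \<le> fst (I i) \<and> fst (I i) \<le> snd (I i) \<and> snd (I i) \<le> b"
      using iv unfolding I_def by fastforce
    have c2: "\<forall>i<card q. \<forall>j<card q. i \<noteq> j \<longrightarrow>
              {fst (I i)<..<snd (I i)} \<inter> {fst (I j)<..<snd (I j)} = {}"
    proof (intro allI impI)
      fix i j assume ij: "i < card q" "j < card q" "i \<noteq> j"
      then have "h i \<noteq> h j" using h unfolding bij_betw_def inj_on_def by auto
      then have "interior (snd (h i)) \<inter> interior (snd (h j)) = {}"
        using tagged_division_ofD(5)[OF conjunct1[OF pq], of "fst (h i)" "snd (h i)" "fst (h j)" "snd (h j)"]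
          mem ij by (metis prod.collapse)
      then show "{fst (I i)<..<snd (I i)} \<inter> {fst (I j)<..<snd (I j)} = {}"
        using iv[OF ij(1)] iv[OF ij(2)] unfolding I_def by auto
    qed
    have s1: "(\<Sum>i<card q. snd (I i) - fst (I i)) = (\<Sum>(x,K)\<in>q. Henstock_Kurzweil_Integration.content K)"
    proof -
      have "(\<Sum>(x,K)\<in>q. Henstock_Kurzweil_Integration.content K) = (\<Sum>i\<in>{0..<card q}. (\<lambda>(x,K). Henstock_Kurzweil_Integration.content K) (h i))"
        using sum.reindex_bij_betw[OF h, of "\<lambda>(x,K). Henstock_Kurzweil_Integration.content K"] by simp
      also have "\<dots> = (\<Sum>i<card q. snd (I i) - fst (I i))"
        using iv unfolding I_def by (intro sum.cong) (auto simp: case_prod_beta atLeast0LessThan)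
      finally show ?thesis by simp
    qed
    have s2: "(\<Sum>i<card q. norm (f (snd (I i)) - f (fst (I i)))) = (\<Sum>(x,K)\<in>q. \<bar>f (Sup K) - f (Inf K)\<bar>)"
    proof -
      have "(\<Sum>(x,K)\<in>q. \<bar>f (Sup K) - f (Inf K)\<bar>) = (\<Sum>i\<in>{0..<card q}. (\<lambda>(x,K). \<bar>f (Sup K) - f (Inf K)\<bar>) (h i))"
        using sum.reindex_bij_betw[OF h, of "\<lambda>(x,K). \<bar>f (Sup K) - f (Inf K)\<bar>"] by simp
      also have "\<dots> = (\<Sum>i<card q. norm (f (snd (I i)) - f (fst (I i))))"
        unfolding I_def by (intro sum.cong) (auto simp: case_prod_beta atLeast0LessThan)
      finally show ?thesis by simp
    qed
    show "(\<Sum>(x,K)\<in>q. \<bar>f (Sup K) - f (Inf K)\<bar>) < e"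
      using H[of "card q" I] c1 c2 s1 s2 pq by simp
  qed
qed

lemma core_gauge:
  fixes f G k :: "real \<Rightarrow> real" and N :: "real set"
  assumes ab: "a \<le> b" and ac: "ac_on a b f" and Gi: "(G has_integral I) {a..b}"
    and Nn: "negligible N"
    and der: "\<And>t. t \<in> {a..b} - N \<Longrightarrow> \<exists>D. (f has_real_derivative D) (at t) \<and> D \<ge> G t + k t"
    and k0: "\<And>t. k t \<ge> 0"
    and e: "e > 0"
  shows "\<exists>\<gamma>. gauge \<gamma> \<and> (\<forall>p. p tagged_division_of {a..b} \<and> \<gamma> fine p \<longrightarrow>
     f b - f a \<ge> I + (\<Sum>(x,K)\<in>p. if x \<in> N then 0 else Henstock_Kurzweil_Integration.content K * k x) - e)"
proof -
  define e' where "e' = e / (b - a + 3)"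
  have e': "e' > 0" using e ab unfolding e'_def by auto
  have e'le: "e' * (b - a) + 2 * e' \<le> e"
  proof -
    have "e' * (b - a + 3) = e" using ab unfolding e'_def by auto
    then show ?thesis using e' by (simp add: algebra_simps)
  qed
  define G' where "G' x = (if x \<in> N then 0 else G x)" for x
  have G'i: "(G' has_integral I) {a..b}"
    by (rule has_integral_spike[OF Nn _ Gi]) (auto simp: G'_def)
  obtain \<gamma>1 where g1: "gauge \<gamma>1" and g1p: "\<And>p. p tagged_division_of {a..b} \<Longrightarrow> \<gamma>1 fine p \<Longrightarrow>
      norm ((\<Sum>(x,K)\<in>p. Henstock_Kurzweil_Integration.content K *\<^sub>R G' x) - I) < e'"
    using G'i e' unfolding has_integral_real by meson
  obtain \<eta> where eta: "\<eta> > 0" and etap: "\<And>p q. p tagged_division_of {a..b} \<Longrightarrow> q \<subseteq> p \<Longrightarrow>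
      (\<Sum>(x,K)\<in>q. Henstock_Kurzweil_Integration.content K) < \<eta> \<Longrightarrow> (\<Sum>(x,K)\<in>q. \<bar>f (Sup K) - f (Inf K)\<bar>) < e'"
    using ac_tagged[OF ac e'] by blast
  have "(indicator N has_integral (0::real)) {a..b}"
    using Nn unfolding negligible_def by (metis box_real(2))
  then obtain \<gamma>2 where g2: "gauge \<gamma>2" and g2p: "\<And>p. p tagged_division_of {a..b} \<Longrightarrow> \<gamma>2 fine p \<Longrightarrow>
      norm ((\<Sum>(x,K)\<in>p. Henstock_Kurzweil_Integration.content K *\<^sub>R (indicator N x :: real)) - 0) < \<eta>"
    using eta unfolding has_integral_real by meson
  have "\<forall>t. \<exists>d D. d > 0 \<and> (t \<in> {a..b} - N \<longrightarrow> D \<ge> G t + k t \<and> (\<forall>y. \<bar>y - t\<bar> < d \<longrightarrow> \<bar>f y - f t - D * (y - t)\<bar> \<le> e' * \<bar>y - t\<bar>))"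
  proof
    fix t
    show "\<exists>d D. d > 0 \<and> (t \<in> {a..b} - N \<longrightarrow> D \<ge> G t + k t \<and> (\<forall>y. \<bar>y - t\<bar> < d \<longrightarrow> \<bar>f y - f t - D * (y - t)\<bar> \<le> e' * \<bar>y - t\<bar>))"
    proof (cases "t \<in> {a..b} - N")
      case False then show ?thesis by (intro exI[of _ 1]) auto
    next
      case True
      then obtain D where D: "(f has_real_derivative D) (at t)" "D \<ge> G t + k t" using der by blast
      then obtain d where d: "d > 0" "\<And>y. norm (y - t) < d \<Longrightarrow> norm (f y - f t - D * (y - t)) \<le> e' * norm (y - t)"
        using e' unfolding has_field_derivative_def has_derivative_at_alt by meson
      show ?thesis using d D(2) by (intro exI[of _ d] exI[of _ D]) auto
    qed
  qed
  then obtain d Dd where d: "\<And>t. d t > 0" and dD: "\<And>t. t \<in> {a..b} - N \<Longrightarrow> Dd t \<ge> G t + k t" 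
    and dp: "\<And>t y. t \<in> {a..b} - N \<Longrightarrow> \<bar>y - t\<bar> < d t \<Longrightarrow>
      \<bar>f y - f t - Dd t * (y - t)\<bar> \<le> e' * \<bar>y - t\<bar>"
    by metis
  define \<gamma> where "\<gamma> t = \<gamma>1 t \<inter> \<gamma>2 t \<inter> ball t (d t)" for t
  have g: "gauge \<gamma>" unfolding \<gamma>_def using g1 g2 d by (auto simp: gauge_def)
  show ?thesis
  proof (intro exI[of _ \<gamma>] conjI allI impI g)
    fix p assume p: "p tagged_division_of {a..b} \<and> \<gamma> fine p"
    then have pd: "p tagged_division_of {a..b}" and f1: "\<gamma>1 fine p" and f2: "\<gamma>2 fine p"
      and f3: "\<And>x K. (x,K) \<in> p \<Longrightarrow> K \<subseteq> ball x (d x)"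
      unfolding \<gamma>_def fine_def by auto
    have fp: "finite p" using pd by blast
    define q where "q = {xK\<in>p. fst xK \<in> N}"
    have qp: "q \<subseteq> p" unfolding q_def by auto
    have sumf: "f b - f a = (\<Sum>(x,K)\<in>p. f (Sup K) - f (Inf K))"
      using additive_tagged_division_1[OF ab pd, of f] by simp
    have sumc: "b - a = (\<Sum>(x,K)\<in>p. Henstock_Kurzweil_Integration.content K)"
    proof -
      have "b - a = (\<Sum>(x,K)\<in>p. Sup K - Inf K)"
        using additive_tagged_division_1[OF ab pd, of "\<lambda>x. x"] by simp
      also have "\<dots> = (\<Sum>(x,K)\<in>p. Henstock_Kurzweil_Integration.content K)"
        apply (intro sum.cong refl)
        using tagged_interval_real[OF pd] by fastforce
      finally show ?thesis .
    qed
    have split: "(\<Sum>(x,K)\<in>p. f (Sup K) - f (Inf K)) =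
       (\<Sum>(x,K)\<in>p. if x \<in> N then f (Sup K) - f (Inf K) else 0) + (\<Sum>(x,K)\<in>p. if x \<in> N then 0 else f (Sup K) - f (Inf K))"
      by (subst sum.distrib[symmetric]) (auto intro!: sum.cong)
    have qsum: "(\<Sum>(x,K)\<in>p. if x \<in> N then f (Sup K) - f (Inf K) else 0) = (\<Sum>(x,K)\<in>q. f (Sup K) - f (Inf K))"
      unfolding q_def using fp by (simp add: sum.inter_filter[symmetric] case_prod_beta if_distrib cong: if_cong)
    have qc: "(\<Sum>(x,K)\<in>q. Henstock_Kurzweil_Integration.content K) = (\<Sum>(x,K)\<in>p. Henstock_Kurzweil_Integration.content K *\<^sub>R (indicator N x :: real))"
      unfolding q_def using fp by (simp add: sum.inter_filter[symmetric] case_prod_beta indicator_def if_distrib Int_def cong: if_cong)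
    have qnn: "(\<Sum>(x,K)\<in>p. Henstock_Kurzweil_Integration.content K *\<^sub>R (indicator N x :: real)) \<ge> 0"
      by (intro sum_nonneg) (auto simp: indicator_def)
    have "(\<Sum>(x,K)\<in>q. Henstock_Kurzweil_Integration.content K) < \<eta>"
      using g2p[OF pd f2] qc qnn by simp
    then have "(\<Sum>(x,K)\<in>q. \<bar>f (Sup K) - f (Inf K)\<bar>) < e'" using etap[OF pd qp] by blast
    moreover have "(\<Sum>(x,K)\<in>q. f (Sup K) - f (Inf K)) \<ge> - (\<Sum>(x,K)\<in>q. \<bar>f (Sup K) - f (Inf K)\<bar>)"
      by (subst sum_negf[symmetric]) (intro sum_mono, auto)
    ultimately have A1: "(\<Sum>(x,K)\<in>q. f (Sup K) - f (Inf K)) \<ge> - e'" by linarith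
    have A2: "(\<Sum>(x,K)\<in>p. if x \<in> N then 0 else f (Sup K) - f (Inf K)) \<ge>
      (\<Sum>(x,K)\<in>p. Henstock_Kurzweil_Integration.content K *\<^sub>R G' x
        + (if x \<in> N then 0 else Henstock_Kurzweil_Integration.content K * k x)
        - e' * Henstock_Kurzweil_Integration.content K)"
    proof (intro sum_mono)
      fix xK assume xK: "xK \<in> p"
      obtain x K where xKe: "xK = (x,K)" by fastforce
      obtain u v where uv: "K = {u..v}" "u \<le> x" "x \<le> v" "a \<le> u" "v \<le> b" "Inf K = u" "Sup K = v"
        "Henstock_Kurzweil_Integration.content K = v - u"
        using tagged_interval_real[OF pd xK[unfolded xKe]] by blast
      show "(case xK of (x,K) \<Rightarrow> Henstock_Kurzweil_Integration.content K *\<^sub>R G' x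
        + (if x \<in> N then 0 else Henstock_Kurzweil_Integration.content K * k x)
        - e' * Henstock_Kurzweil_Integration.content K) \<le> (case xK of (x,K) \<Rightarrow> if x \<in> N then 0 else f (Sup K) - f (Inf K))"
      proof (cases "x \<in> N")
        case True
        then show ?thesis using xKe uv e' by (simp add: G'_def)
      next
        case False
        have xab: "x \<in> {a..b} - N" using False uv by auto
        have Kb: "K \<subseteq> ball x (d x)" using f3 xK xKe by blast
        have "v \<in> K" "u \<in> K" using uv by auto
        then have "v \<in> ball x (d x)" "u \<in> ball x (d x)" using Kb by auto
        then have "\<bar>v - x\<bar> < d x" "\<bar>u - x\<bar> < d x" by (auto simp: dist_real_def abs_minus_commute)
        from dp[OF xab this(1)] dp[OF xab this(2)]
        have h1: "\<bar>f v - f x - Dd x * (v - x)\<bar> \<le> e' * \<bar>v - x\<bar>" and h2: "\<bar>f u - f x - Dd x * (u - x)\<bar> \<le> e' * \<bar>u - x\<bar>" by auto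
        have av: "\<bar>v - x\<bar> = v - x" and au: "\<bar>u - x\<bar> = x - u" using uv by auto
        have "f v - f x - Dd x * (v - x) \<ge> - (e' * (v - x))" using h1 unfolding av abs_le_iff by linarith
        moreover have "f u - f x - Dd x * (u - x) \<le> e' * (x - u)" using h2 unfolding au abs_le_iff by linarith
        moreover have "Dd x * (v - u) = Dd x * (v - x) - Dd x * (u - x)" by (simp add: algebra_simps)
        moreover have "e' * (v - u) = e' * (v - x) + e' * (x - u)" by (simp add: algebra_simps)
        ultimately have "f v - f u \<ge> Dd x * (v - u) - e' * (v - u)" by linarith
        moreover have "Dd x * (v - u) \<ge> (G x + k x) * (v - u)" using dD[OF xab] uv by (simp add: mult_right_mono)
        ultimately have "f v - f u \<ge> (G x + k x) * (v - u) - e' * (v - u)" by linarith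
        moreover have "(G x + k x) * (v - u) = (v - u) * G x + (v - u) * k x" by (simp add: algebra_simps)
        ultimately show ?thesis using xKe uv False by (simp add: G'_def)
      qed
    qed
    show "f b - f a \<ge> I + (\<Sum>(x,K)\<in>p. if x \<in> N then 0 else Henstock_Kurzweil_Integration.content K * k x) - e"
    proof -
      have dist: "(\<Sum>(x,K)\<in>p. Henstock_Kurzweil_Integration.content K *\<^sub>R G' x
        + (if x \<in> N then 0 else Henstock_Kurzweil_Integration.content K * k x)
        - e' * Henstock_Kurzweil_Integration.content K) =
        (\<Sum>(x,K)\<in>p. Henstock_Kurzweil_Integration.content K *\<^sub>R G' x)
        + (\<Sum>(x,K)\<in>p. if x \<in> N then 0 else Henstock_Kurzweil_Integration.content K * k x)
        - e' * (\<Sum>(x,K)\<in>p. Henstock_Kurzweil_Integration.content K)"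
        unfolding sum_subtractf[symmetric] sum.distrib[symmetric] sum_distrib_left by (intro sum.cong refl) auto
      have "\<bar>(\<Sum>(x,K)\<in>p. Henstock_Kurzweil_Integration.content K *\<^sub>R G' x) - I\<bar> < e'"
        using g1p[OF pd f1] by (simp only: real_norm_def)
      then have B: "(\<Sum>(x,K)\<in>p. Henstock_Kurzweil_Integration.content K *\<^sub>R G' x) \<ge> I - e'" by linarith
      define SK where "SK = (\<Sum>(x,K)\<in>p. if x \<in> N then 0 else Henstock_Kurzweil_Integration.content K * k x)"
      define SG where "SG = (\<Sum>(x,K)\<in>p. Henstock_Kurzweil_Integration.content K *\<^sub>R G' x)"
      define SQ where "SQ = (\<Sum>(x,K)\<in>q. f (Sup K) - f (Inf K))"
      define SN where "SN = (\<Sum>(x,K)\<in>p. if x \<in> N then 0 else f (Sup K) - f (Inf K))"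
      have "f b - f a = SQ + SN" unfolding SQ_def SN_def using sumf split qsum by linarith
      moreover have "SN \<ge> SG + SK - e' * (\<Sum>(x,K)\<in>p. Henstock_Kurzweil_Integration.content K)"
        using A2 dist unfolding SN_def SG_def SK_def by linarith
      then have "SN \<ge> SG + SK - e' * (b - a)" by (simp only: sumc)
      moreover have "SQ \<ge> - e'" using A1 unfolding SQ_def .
      moreover have "SG \<ge> I - e'" using B unfolding SG_def .
      ultimately have "f b - f a \<ge> I + SK - (e' * (b - a) + 2 * e')" by linarith
      then show ?thesis using e'le unfolding SK_def by linarith
    qed
  qed
qed




lemma ftc_ineq:
  fixes f G k :: "real \<Rightarrow> real" and N :: "real set"
  assumes ab: "a \<le> b" and ac: "ac_on a b f" and Gi: "(G has_integral I) {a..b}"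
    and Nn: "negligible N"
    and der: "\<And>t. t \<in> {a..b} - N \<Longrightarrow> \<exists>D. (f has_real_derivative D) (at t) \<and> D \<ge> G t + k t"
    and k0: "\<And>t. k t \<ge> 0"
  shows "f b - f a \<ge> I"
proof (rule ccontr)
  assume "\<not> f b - f a \<ge> I"
  then have "0 < I - (f b - f a)" by linarith
  then have e: "(I - (f b - f a)) / 2 > 0" by simp
  define \<epsilon> where "\<epsilon> = (I - (f b - f a)) / 2"
  have e: "\<epsilon> > 0" using e unfolding \<epsilon>_def .
  have "2 * \<epsilon> = I - (f b - f a)" unfolding \<epsilon>_def by simp
  then have Ie: "I = f b - f a + 2 * \<epsilon>" by linarith
  obtain \<gamma> where g: "gauge \<gamma>" and gp': "\<forall>p. p tagged_division_of {a..b} \<and> \<gamma> fine p \<longrightarrow>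
     f b - f a \<ge> I + (\<Sum>(x,K)\<in>p. if x \<in> N then 0 else Henstock_Kurzweil_Integration.content K * k x) - \<epsilon>"
    using core_gauge[OF ab ac Gi Nn der k0 e] by blast
  have gp: "f b - f a \<ge> I + (\<Sum>(x,K)\<in>p. if x \<in> N then 0 else Henstock_Kurzweil_Integration.content K * k x) - \<epsilon>"
    if "p tagged_division_of {a..b}" "\<gamma> fine p" for p using gp' that by blast
  obtain p where p: "p tagged_division_of {a..b}" "\<gamma> fine p" using fine_division_exists_real[OF g] by blast
  have "(\<Sum>(x,K)\<in>p. if x \<in> N then 0 else Henstock_Kurzweil_Integration.content K * k x) \<ge> 0"
  proof (intro sum_nonneg)
    fix xK assume "xK \<in> p"
    show "0 \<le> (case xK of (x,K) \<Rightarrow> if x \<in> N then 0 else Henstock_Kurzweil_Integration.content K * k x)"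
      using k0[of "fst xK"] content_pos_le[of "snd xK"] by (simp add: case_prod_beta)
  qed
  moreover note gp[OF p]
  ultimately show False using e Ie by linarith
qed

lemma ftc_eq_k0:
  fixes f G k :: "real \<Rightarrow> real" and N :: "real set"
  assumes ab: "a \<le> b" and ac: "ac_on a b f" and Gi: "(G has_integral I) {a..b}"
    and Nn: "negligible N"
    and der: "\<And>t. t \<in> {a..b} - N \<Longrightarrow> \<exists>D. (f has_real_derivative D) (at t) \<and> D \<ge> G t + k t"
    and k0: "\<And>t. k t \<ge> 0"
    and eq: "f b - f a \<le> I"
  shows "negligible {t \<in> {a..b}. k t > 0}"
proof -
  have neg: "negligible {t \<in> {a..b} - N. k t \<ge> c}" if c: "c > 0" for c
  proof -
    define S where "S = {t \<in> {a..b} - N. k t \<ge> c}"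
    have "(indicator S has_integral (0::real)) {a..b}"
      unfolding has_integral_real
    proof (intro allI impI)
      fix e :: real assume e: "e > 0"
      then have ec: "e * c / 2 > 0" using c by simp
      obtain \<gamma> where g: "gauge \<gamma>" and gp: "\<forall>p. p tagged_division_of {a..b} \<and> \<gamma> fine p \<longrightarrow>
         f b - f a \<ge> I + (\<Sum>(x,K)\<in>p. if x \<in> N then 0 else Henstock_Kurzweil_Integration.content K * k x) - e * c / 2"
        using core_gauge[OF ab ac Gi Nn der k0 ec] by blast
      show "\<exists>\<gamma>. gauge \<gamma> \<and> (\<forall>\<D>. \<D> tagged_division_of {a..b} \<and> \<gamma> fine \<D> \<longrightarrow>
                 norm ((\<Sum>(x,K)\<in>\<D>. Henstock_Kurzweil_Integration.content K *\<^sub>R (indicator S x :: real)) - 0) < e)"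
      proof (intro exI[of _ \<gamma>] conjI allI impI g)
        fix p assume p: "p tagged_division_of {a..b} \<and> \<gamma> fine p"
        have s1: "(\<Sum>(x,K)\<in>p. if x \<in> N then 0 else Henstock_Kurzweil_Integration.content K * k x) \<le> e * c / 2"
          using gp p eq by (meson add_le_cancel_left diff_le_eq order_trans)
        have s2: "c * (\<Sum>(x,K)\<in>p. Henstock_Kurzweil_Integration.content K *\<^sub>R (indicator S x :: real))
            \<le> (\<Sum>(x,K)\<in>p. if x \<in> N then 0 else Henstock_Kurzweil_Integration.content K * k x)"
          unfolding sum_distrib_left
        proof (intro sum_mono)
          fix xK assume "xK \<in> p"
          show "c * (case xK of (x,K) \<Rightarrow> Henstock_Kurzweil_Integration.content K *\<^sub>R (indicator S x :: real))
            \<le> (case xK of (x,K) \<Rightarrow> if x \<in> N then 0 else Henstock_Kurzweil_Integration.content K * k x)"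
          proof (cases xK)
            case (Pair x K)
            have cp: "Henstock_Kurzweil_Integration.content K \<ge> 0" by (rule content_pos_le)
            show ?thesis
            proof (cases "x \<in> S")
              case True
              then have xn: "x \<notin> N" "k x \<ge> c" and ind: "indicator S x = (1::real)" unfolding S_def by auto
              have "c * Henstock_Kurzweil_Integration.content K \<le> k x * Henstock_Kurzweil_Integration.content K"
                using xn cp by (simp add: mult_right_mono)
              then show ?thesis using Pair xn ind by (simp add: mult.commute)
            next
              case False
              then show ?thesis using Pair cp k0 by (simp add: indicator_def)
            qed
          qed
        qed
        have s3: "(\<Sum>(x,K)\<in>p. Henstock_Kurzweil_Integration.content K *\<^sub>R (indicator S x :: real)) \<ge> 0"
          by (intro sum_nonneg) (auto simp: indicator_def content_pos_le)
        have "c * (\<Sum>(x,K)\<in>p. Henstock_Kurzweil_Integration.content K *\<^sub>R (indicator S x :: real)) \<le> c * (e / 2)"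
          using s1 s2 by (simp add: mult.commute)
        then have "(\<Sum>(x,K)\<in>p. Henstock_Kurzweil_Integration.content K *\<^sub>R (indicator S x :: real)) \<le> e / 2"
          using c by simp
        then show "norm ((\<Sum>(x,K)\<in>p. Henstock_Kurzweil_Integration.content K *\<^sub>R (indicator S x :: real)) - 0) < e"
          using s3 e by simp
      qed
    qed
    then have "(indicator S has_integral (0::real)) UNIV"
      by (rule has_integral_on_superset) (auto simp: S_def indicator_def)
    then show ?thesis using negligible_UNIV unfolding S_def by blast
  qed
  have "{t \<in> {a..b}. k t > 0} \<subseteq> N \<union> (\<Union>n. {t \<in> {a..b} - N. k t \<ge> 1 / Suc n})"
  proof
    fix t assume t: "t \<in> {t \<in> {a..b}. k t > 0}"
    show "t \<in> N \<union> (\<Union>n. {t \<in> {a..b} - N. k t \<ge> 1 / Suc n})"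
    proof (cases "t \<in> N")
      case False
      have "0 < k t" using t by simp
      from reals_Archimedean[OF this] obtain n where "inverse (real (Suc n)) < k t" by blast
      then have "1 / real (Suc n) < k t" by (simp add: inverse_eq_divide)
      then have "t \<in> {t \<in> {a..b} - N. k t \<ge> 1 / Suc n}" using t False by auto
      then show ?thesis by blast
    qed auto
  qed
  moreover have "negligible (N \<union> (\<Union>n. {t \<in> {a..b} - N. k t \<ge> 1 / Suc n}))"
    using Nn neg by (intro negligible_Un negligible_Union_nat) auto
  ultimately show ?thesis using negligible_subset by blast
qed

lemma ac_on_sub:
  assumes "ac_on a b f" "a \<le> s" "t \<le> b"
  shows "ac_on s t f"
  unfolding ac_on_def
proof (intro allI impI)
  fix e :: real assume "e > 0"
  then obtain d where "d > 0" and H: "\<forall>(n::nat) (I::nat \<Rightarrow> real \<times> real).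
        (\<forall>i<n. a \<le> fst (I i) \<and> fst (I i) \<le> snd (I i) \<and> snd (I i) \<le> b)
        \<and> (\<forall>i<n. \<forall>j<n. i \<noteq> j \<longrightarrow>
              {fst (I i)<..<snd (I i)} \<inter> {fst (I j)<..<snd (I j)} = {})
        \<and> (\<Sum>i<n. snd (I i) - fst (I i)) < d
        \<longrightarrow> (\<Sum>i<n. norm (f (snd (I i)) - f (fst (I i)))) < e"
    using assms(1) unfolding ac_on_def by blast
  show "\<exists>\<delta>>0. \<forall>(n::nat) (I::nat \<Rightarrow> real \<times> real).
        (\<forall>i<n. s \<le> fst (I i) \<and> fst (I i) \<le> snd (I i) \<and> snd (I i) \<le> t)
        \<and> (\<forall>i<n. \<forall>j<n. i \<noteq> j \<longrightarrow>
              {fst (I i)<..<snd (I i)} \<inter> {fst (I j)<..<snd (I j)} = {})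
        \<and> (\<Sum>i<n. snd (I i) - fst (I i)) < \<delta>
        \<longrightarrow> (\<Sum>i<n. norm (f (snd (I i)) - f (fst (I i)))) < e"
  proof (intro exI[of _ d] conjI allI impI \<open>d > 0\<close>)
    fix n :: nat and I :: "nat \<Rightarrow> real \<times> real"
    assume A: "(\<forall>i<n. s \<le> fst (I i) \<and> fst (I i) \<le> snd (I i) \<and> snd (I i) \<le> t)
        \<and> (\<forall>i<n. \<forall>j<n. i \<noteq> j \<longrightarrow>
              {fst (I i)<..<snd (I i)} \<inter> {fst (I j)<..<snd (I j)} = {})
        \<and> (\<Sum>i<n. snd (I i) - fst (I i)) < d"
    have "\<forall>i<n. a \<le> fst (I i) \<and> fst (I i) \<le> snd (I i) \<and> snd (I i) \<le> b"
    proof (intro allI impI)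
      fix i assume "i < n"
      then have "s \<le> fst (I i) \<and> fst (I i) \<le> snd (I i) \<and> snd (I i) \<le> t" using A by blast
      then show "a \<le> fst (I i) \<and> fst (I i) \<le> snd (I i) \<and> snd (I i) \<le> b" using assms(2,3) by linarith
    qed
    then show "(\<Sum>i<n. norm (f (snd (I i)) - f (fst (I i)))) < e"
      using A by (intro mp[OF spec[OF spec[OF H, of n], of I]]) simp
  qed
qed



lemma fy_bdd:
  fixes \<psi> :: "'x::real_normed_vector \<Rightarrow> real"
  assumes sl: "superlinear \<psi>" and nn: "\<And>v. \<psi> v \<ge> 0"
  shows "bdd_above (range (\<lambda>v. blinfun_apply \<phi> v - \<psi> v))"
proof -
  obtain R where R: "\<And>v. norm v \<ge> R \<Longrightarrow> \<psi> v \<ge> (norm \<phi> + 1) * norm v"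
    using sl unfolding superlinear_def by blast
  show ?thesis
  proof (rule bdd_aboveI2)
    fix v
    have a: "blinfun_apply \<phi> v \<le> norm \<phi> * norm v"
      using norm_blinfun[of \<phi> v] by simp
    show "blinfun_apply \<phi> v - \<psi> v \<le> norm \<phi> * \<bar>R\<bar>"
    proof (cases "norm v \<ge> R")
      case True
      then have "\<psi> v \<ge> norm \<phi> * norm v + norm v" using R[of v] by (simp add: algebra_simps)
      moreover have "norm \<phi> * \<bar>R\<bar> \<ge> 0" by simp
      ultimately show ?thesis using a norm_ge_zero[of v] by linarith
    next
      case False
      then have "norm \<phi> * norm v \<le> norm \<phi> * \<bar>R\<bar>" by (intro mult_left_mono) auto
      then show ?thesis using a nn[of v] by linarith
    qed
  qed
qed

lemma fy_le:
  fixes \<psi> :: "'x::real_normed_vector \<Rightarrow> real"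
  assumes sl: "superlinear \<psi>" and nn: "\<And>v. \<psi> v \<ge> 0"
  shows "blinfun_apply (dual \<xi>) v - \<psi> v \<le> fconj dual \<psi> \<xi>"
  unfolding fconj_def by (rule cSUP_upper[OF UNIV_I fy_bdd[OF sl nn]])

theorem proposition2p6:
  fixes T :: real
    and dual :: "'d::{banach,second_countable_topology} \<Rightarrow> ('x::{banach,second_countable_topology} \<Rightarrow>\<^sub>L real)"
    and D :: "'x set"
    and E :: "real \<Rightarrow> 'x \<Rightarrow> ereal"
    and Psi :: "'x \<Rightarrow> 'x \<Rightarrow> real"
    and F :: "real \<Rightarrow> 'x \<Rightarrow> 'd set"
    and Pw :: "real \<Rightarrow> 'x \<Rightarrow> 'd \<Rightarrow> real"
    and P :: "real \<Rightarrow> 'x"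
  assumes "gen_gradient_system T dual D E Psi F Pw"
    and "chain_rule_ineq T dual E Psi F Pw"
    and "EDI_solution T dual E Psi F Pw P"
  shows "EDB_solution T dual E Psi F Pw P"
proof -
  note gg = assms(1)[unfolded gen_gradient_system_def]
  have T0: "T > 0" using gg by (rule conjunct1)
  have dp: "dual_pairing dual" using gg by (elim conjE)
  have lb: "\<exists>c. \<forall>t\<in>{0..T}. \<forall>x. E t x \<ge> ereal c" using gg by (elim conjE)
  have dom: "\<forall>t\<in>{0..T}. {x. E t x < \<infinity>} = D" using gg by (elim conjE)
  have psi: "\<forall>P\<in>D. convex_on UNIV (Psi P) \<and> (\<forall>v. Psi P v \<ge> 0)
              \<and> superlinear (Psi P) \<and> superlinear (fconj dual (Psi P))" using gg by (elim conjE)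
  obtain c0 where c0: "\<And>t x. t \<in> {0..T} \<Longrightarrow> E t x \<ge> ereal c0" using lb by blast
  have bl: "bounded_linear dual" using dp unfolding dual_pairing_def by blast
  have dneg: "dual (- x) = - dual x" for x using bl by (simp add: linear_simps)
  obtain Pd Es Xi where acP: "ac_on 0 T P" and der: "is_deriv_ae T P Pd" and bv: "bv_on 0 T Es"
    and EsE: "\<forall>t\<in>{0..T}. ereal (Es t) \<ge> E t (P t)"
    and Es0: "ereal (Es 0) = E 0 (P 0)"
    and Xii: "set_integrable lborel {0..T} Xi"
    and XiF: "AE t in lborel. t \<in> {0<..<T} \<longrightarrow> Xi t \<in> F t (P t)"
    and ips: "set_integrable lborel {0..T} (\<lambda>r. Psi (P r) (Pd r))"
    and ipc: "set_integrable lborel {0..T} (\<lambda>r. fconj dual (Psi (P r)) (- Xi r))"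
    and ipw: "set_integrable lborel {0..T} (\<lambda>r. Pw r (P r) (Xi r))"
    and edi: "\<forall>s t. 0 \<le> s \<and> s \<le> t \<and> t \<le> T \<longrightarrow>
             Es t + (LINT r:{s..t}|lborel. Psi (P r) (Pd r) + fconj dual (Psi (P r)) (- Xi r))
             \<le> Es s + (LINT r:{s..t}|lborel. Pw r (P r) (Xi r))"
    using assms(3) unfolding EDI_solution_def by blast
  have PD: "P t \<in> D" if "t \<in> {0..T}" for t
  proof -
    have "E t (P t) \<le> ereal (Es t)" using EsE that by blast
    then have "E t (P t) < \<infinity>" using le_less_trans by fastforce
    then have "P t \<in> {x. E t x < \<infinity>}" by simp
    then show ?thesis using dom[rule_format, OF that] by (simp only:)
  qed
  have psl: "superlinear (Psi (P t))" "\<And>v. Psi (P t) v \<ge> 0" if "t \<in> {0..T}" for t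
    using bspec[OF psi PD[OF that]] by blast+
  have FY: "blinfun_apply (dual \<xi>) v - Psi (P t) v \<le> fconj dual (Psi (P t)) \<xi>" if "t \<in> {0..T}" for t \<xi> v
    by (rule fy_le[OF psl[OF that]])
  obtain C where C: "\<forall>(n::nat) (tt::nat \<Rightarrow> real).
        (\<forall>i\<le>n. 0 \<le> tt i \<and> tt i \<le> T) \<and> (\<forall>i<n. tt i \<le> tt (Suc i))
        \<longrightarrow> (\<Sum>i<n. \<bar>Es (tt (Suc i)) - Es (tt i)\<bar>) \<le> C"
    using bv unfolding bv_on_def by blast
  have Esb: "Es t \<le> Es 0 + C" if "t \<in> {0..T}" for t
  proof -
    define tt where "tt i = (if i = 0 then 0 else t)" for i :: nat
    have "(\<Sum>i<(1::nat). \<bar>Es (tt (Suc i)) - Es (tt i)\<bar>) \<le> C"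
      using C[rule_format, of 1 tt] that T0 unfolding tt_def by auto
    then show ?thesis unfolding tt_def by simp
  qed
  define e where "e t = real_of_ereal (E t (P t))" for t
  have Ee: "E t (P t) = ereal (e t)" and ec0: "c0 \<le> e t" and eEs: "e t \<le> Es t" if "t \<in> {0..T}" for t
  proof -
    have l: "ereal c0 \<le> E t (P t)" using c0 that by blast
    have u: "E t (P t) \<le> ereal (Es t)" using EsE that by blast
    show "E t (P t) = ereal (e t)" unfolding e_def using l u by (cases "E t (P t)") auto
    show "c0 \<le> e t" unfolding e_def using l u by (cases "E t (P t)") auto
    show "e t \<le> Es t" unfolding e_def using l u by (cases "E t (P t)") auto
  qed
  have bnd: "\<exists>C. \<forall>t\<in>{0<..<T}. \<bar>E t (P t)\<bar> \<le> ereal C"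
  proof (intro exI[of _ "\<bar>c0\<bar> + \<bar>Es 0\<bar> + \<bar>C\<bar>"] ballI)
    fix t assume t: "t \<in> {0<..<T}"
    then have t': "t \<in> {0..T}" by auto
    have "\<bar>e t\<bar> \<le> \<bar>c0\<bar> + \<bar>Es 0\<bar> + \<bar>C\<bar>" using ec0[OF t'] eEs[OF t'] Esb[OF t'] by linarith
    then show "\<bar>E t (P t)\<bar> \<le> ereal (\<bar>c0\<bar> + \<bar>Es 0\<bar> + \<bar>C\<bar>)" using Ee[OF t'] by simp
  qed
  have prem: "ac_on 0 T P \<and> is_deriv_ae T P Pd \<and> set_integrable lborel {0..T} Xi
        \<and> (\<exists>C. \<forall>t\<in>{0<..<T}. \<bar>E t (P t)\<bar> \<le> ereal C)
        \<and> (AE t in lborel. t \<in> {0<..<T} \<longrightarrow> Xi t \<in> F t (P t))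
        \<and> set_integrable lborel {0..T} (\<lambda>t. Psi (P t) (Pd t))
        \<and> set_integrable lborel {0..T} (\<lambda>t. fconj dual (Psi (P t)) (- Xi t))"
    using acP der Xii bnd XiF ips ipc by blast
  have crc: "(\<forall>t\<in>{0..T}. \<bar>E t (P t)\<bar> \<noteq> \<infinity>)
          \<and> ac_on 0 T (\<lambda>t. real_of_ereal (E t (P t)))
          \<and> (AE t in lborel. t \<in> {0<..<T} \<longrightarrow>
               (\<exists>D. ((\<lambda>s. real_of_ereal (E s (P s))) has_real_derivative D) (at t)
                    \<and> D \<ge> blinfun_apply (dual (Xi t)) (Pd t) + Pw t (P t) (Xi t)))"
    by (rule assms(2)[unfolded chain_rule_ineq_def, THEN spec[of _ P], THEN spec[of _ Pd], THEN spec[of _ Xi], THEN mp, OF prem])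
  have acE: "ac_on 0 T e" using crc unfolding e_def[abs_def] by blast
  have crAE: "AE t in lborel. t \<in> {0<..<T} \<longrightarrow>
               (\<exists>D. (e has_real_derivative D) (at t)
                    \<and> D \<ge> blinfun_apply (dual (Xi t)) (Pd t) + Pw t (P t) (Xi t))"
    using crc unfolding e_def[abs_def] by blast
  obtain N1 where N1: "{x \<in> space lborel. \<not> (x \<in> {0<..<T} \<longrightarrow>
               (\<exists>D. (e has_real_derivative D) (at x)
                    \<and> D \<ge> blinfun_apply (dual (Xi x)) (Pd x) + Pw x (P x) (Xi x)))} \<subseteq> N1"
      and N1m: "emeasure lborel N1 = 0" and N1s: "N1 \<in> sets lborel"
    using crAE by (rule AE_E)
  have "N1 \<in> null_sets lborel" using N1m N1s by (simp add: null_sets_def)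
  then have negN1: "negligible N1" unfolding negligible_iff_null_sets by (rule null_sets_completionI)
  define N where "N = N1 \<union> {0, T}"
  have negN: "negligible N" unfolding N_def using negN1 by simp
  define G where "G = (\<lambda>r. Pw r (P r) (Xi r) - (Psi (P r) (Pd r) + fconj dual (Psi (P r)) (- Xi r)))"
  define h where "h r = Psi (P r) (Pd r) + fconj dual (Psi (P r)) (- Xi r) + blinfun_apply (dual (Xi r)) (Pd r)" for r
  define k where "k r = max 0 (h r)" for r
  have k0: "k r \<ge> 0" for r unfolding k_def by simp
  have h0: "h r \<ge> 0" if "r \<in> {0..T}" for r
  proof -
    have "blinfun_apply (dual (- Xi r)) (Pd r) - Psi (P r) (Pd r) \<le> fconj dual (Psi (P r)) (- Xi r)"
      by (rule FY[OF that])
    then show ?thesis unfolding h_def dneg by (simp add: blinfun.bilinear_simps)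
  qed
  have kh: "k r = h r" if "r \<in> {0..T}" for r using h0[OF that] unfolding k_def by simp
  have derk: "\<exists>D. (e has_real_derivative D) (at t) \<and> D \<ge> G t + k t" if t: "t \<in> {0..T} - N" for t
  proof -
    have t1: "t \<in> {0<..<T}" "t \<notin> N1" using t unfolding N_def by auto
    then obtain D where D: "(e has_real_derivative D) (at t)"
       "D \<ge> blinfun_apply (dual (Xi t)) (Pd t) + Pw t (P t) (Xi t)"
      using N1 by auto
    have "G t + k t = blinfun_apply (dual (Xi t)) (Pd t) + Pw t (P t) (Xi t)"
      using kh[of t] t unfolding G_def h_def by auto
    then show ?thesis using D by auto
  qed
  have iG: "set_integrable lborel {0..T} G"
    unfolding G_def by (intro set_integral_diff(1) set_integral_add(1) ipw ips ipc)
  have iGs: "set_integrable lborel {s..t} G" if "0 \<le> s" "t \<le> T" for s t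
    by (rule set_integrable_subset[OF iG]) (use that in auto)
  have LG: "(LINT r:{s..t}|lborel. G r) = (LINT r:{s..t}|lborel. Pw r (P r) (Xi r))
      - (LINT r:{s..t}|lborel. Psi (P r) (Pd r) + fconj dual (Psi (P r)) (- Xi r))"
    if "0 \<le> s" "t \<le> T" for s t
  proof -
    have a: "set_integrable lborel {s..t} (\<lambda>r. Psi (P r) (Pd r))"
      by (rule set_integrable_subset[OF ips]) (use that in auto)
    have b: "set_integrable lborel {s..t} (\<lambda>r. fconj dual (Psi (P r)) (- Xi r))"
      by (rule set_integrable_subset[OF ipc]) (use that in auto)
    have c: "set_integrable lborel {s..t} (\<lambda>r. Pw r (P r) (Xi r))"
      by (rule set_integrable_subset[OF ipw]) (use that in auto)
    show ?thesis unfolding G_def by (rule set_integral_diff(2)[OF c set_integral_add(1)[OF a b]])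
  qed
  have GI: "integral {s..t} G = (LINT r:{s..t}|lborel. G r)" if "0 \<le> s" "t \<le> T" for s t
    using set_borel_integral_eq_integral(2)[OF iGs[OF that]] by simp
  have Gint: "(G has_integral integral {s..t} G) {s..t}" if "0 \<le> s" "t \<le> T" for s t
    using set_borel_integral_eq_integral(1)[OF iGs[OF that]] by (simp add: has_integral_integral)
  have ftc: "e t - e s \<ge> integral {s..t} G" if st: "0 \<le> s" "s \<le> t" "t \<le> T" for s t
  proof (rule ftc_ineq[OF st(2) ac_on_sub[OF acE st(1) st(3)] Gint[OF st(1) st(3)] negN _ k0])
    fix r assume "r \<in> {s..t} - N"
    then have "r \<in> {0..T} - N" using st by auto
    then show "\<exists>D. (e has_real_derivative D) (at r) \<and> D \<ge> G r + k r" by (rule derk)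
  qed
  have up0: "e t - e 0 \<le> integral {0..t} G" if t: "0 \<le> t" "t \<le> T" for t
  proof -
    have "Es t + (LINT r:{0..t}|lborel. Psi (P r) (Pd r) + fconj dual (Psi (P r)) (- Xi r))
             \<le> Es 0 + (LINT r:{0..t}|lborel. Pw r (P r) (Xi r))"
      using edi t by auto
    moreover have "e t \<le> Es t" using eEs t by auto
    moreover have "Es 0 = e 0" using Es0 Ee[of 0] T0 by auto
    moreover have "integral {0..t} G = (LINT r:{0..t}|lborel. Pw r (P r) (Xi r))
      - (LINT r:{0..t}|lborel. Psi (P r) (Pd r) + fconj dual (Psi (P r)) (- Xi r))"
      using GI[of 0 t] LG[of 0 t] t by simp
    ultimately show ?thesis by linarith
  qed
  have eq0: "e t - e 0 = integral {0..t} G" if t: "0 \<le> t" "t \<le> T" for t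
    using up0[OF t] ftc[of 0 t] t by simp
  have eqst: "e t - e s = integral {s..t} G" if st: "0 \<le> s" "s \<le> t" "t \<le> T" for s t
  proof -
    have "G integrable_on {0..t}" using Gint[of 0 t] st by (auto simp: has_integral_iff)
    then have "integral {0..s} G + integral {s..t} G = integral {0..t} G"
      using st by (intro Henstock_Kurzweil_Integration.integral_combine) auto
    then show ?thesis using eq0[of t] eq0[of s] st by simp
  qed
  have negk: "negligible {t \<in> {0..T}. k t > 0}"
    by (rule ftc_eq_k0[OF _ acE Gint[of 0 T] negN derk k0]) (use eq0[of T] T0 in auto)
  have AEk: "AE t in lborel. t \<notin> {t \<in> {0..T}. k t > 0}"
  proof -
    have "AE t in lebesgue. t \<notin> {t \<in> {0..T}. k t > 0}"
      using negk unfolding negligible_iff_null_sets by (rule AE_not_in)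
    then show ?thesis by (simp only: AE_completion_iff)
  qed
  have sub: "- Xi t \<in> subdiff dual (Psi (P t)) (Pd t)" if t: "t \<in> {0..T}" "h t = 0" for t
    unfolding subdiff_def
  proof (intro CollectI allI)
    fix w
    have "blinfun_apply (dual (- Xi t)) w - Psi (P t) w \<le> fconj dual (Psi (P t)) (- Xi t)"
      by (rule FY[OF t(1)])
    moreover have "fconj dual (Psi (P t)) (- Xi t) = - blinfun_apply (dual (Xi t)) (Pd t) - Psi (P t) (Pd t)"
      using t(2) unfolding h_def by linarith
    moreover have "blinfun_apply (dual (- Xi t)) (w - Pd t) = - (blinfun_apply (dual (Xi t)) w - blinfun_apply (dual (Xi t)) (Pd t))"
      unfolding dneg by (simp add: blinfun.bilinear_simps)
    moreover have "blinfun_apply (dual (- Xi t)) w = - blinfun_apply (dual (Xi t)) w"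
      unfolding dneg by (simp add: blinfun.bilinear_simps)
    ultimately show "Psi (P t) w \<ge> Psi (P t) (Pd t) + blinfun_apply (dual (- Xi t)) (w - Pd t)"
      by linarith
  qed
  show ?thesis
    unfolding EDB_solution_def
  proof (intro conjI exI[of _ Pd] exI[of _ Xi] acP der Xii ips ipc ipw allI impI)
    show "AE t in lborel. t \<in> {0<..<T} \<longrightarrow>
              Xi t \<in> F t (P t) \<and> 0 \<in> (\<lambda>\<eta>. \<eta> + Xi t) ` subdiff dual (Psi (P t)) (Pd t)"
      using XiF AEk
    proof eventually_elim
      case (elim t)
      show ?case
      proof
        assume t: "t \<in> {0<..<T}"
        then have t': "t \<in> {0..T}" by auto
        have "k t \<le> 0" using elim(2) t' by auto
        then have "h t = 0" using kh[OF t'] h0[OF t'] by simp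
        then have "- Xi t \<in> subdiff dual (Psi (P t)) (Pd t)" by (rule sub[OF t'])
        then have "0 \<in> (\<lambda>\<eta>. \<eta> + Xi t) ` subdiff dual (Psi (P t)) (Pd t)"
          by (rule rev_image_eqI) simp
        then show "Xi t \<in> F t (P t) \<and> 0 \<in> (\<lambda>\<eta>. \<eta> + Xi t) ` subdiff dual (Psi (P t)) (Pd t)"
          using elim(1) t by blast
      qed
    qed
  next
    fix s t :: real assume st: "0 \<le> s \<and> s \<le> t \<and> t \<le> T"
    have s': "s \<in> {0..T}" and t': "t \<in> {0..T}" using st by auto
    have "e t - e s = (LINT r:{s..t}|lborel. Pw r (P r) (Xi r))
      - (LINT r:{s..t}|lborel. Psi (P r) (Pd r) + fconj dual (Psi (P r)) (- Xi r))"
      using eqst[of s t] GI[of s t] LG[of s t] st by simp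
    then have "e t + (LINT r:{s..t}|lborel. Psi (P r) (Pd r) + fconj dual (Psi (P r)) (- Xi r))
      = e s + (LINT r:{s..t}|lborel. Pw r (P r) (Xi r))" by linarith
    then show "E t (P t) + ereal (LINT r:{s..t}|lborel. Psi (P r) (Pd r) + fconj dual (Psi (P r)) (- Xi r))
             = E s (P s) + ereal (LINT r:{s..t}|lborel. Pw r (P r) (Xi r))"
      unfolding Ee[OF s'] Ee[OF t'] by simp
  qed
qed

end
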